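(* Let $\theta,\theta'$ be real antisymmetric $n\times n$ matrices and $l\ge 1$. The map $\Sigma$, defined on elementary tensors $\Phi=a\otimes\phi_1\otimes\cdots\otimes\phi_l\in \mathrm{B}^l$ by $$\Sigma(\Phi)(a_1,\ldots,a_l)=a\cdot\sigma(\phi_1)(a_1)\cdots\sigma(\phi_l)(a_l)$$ (ordinary commutative product of polynomials, the result regarded as an element of $A_{\theta'}$), extended by linearity and then to the completion $\mathbf{B}^l$, is an isomorphism of complexes $\Sigma:\mathbf{B}^l\to C^l$, i.e. it is a linear bijection satisfying $d_l\Sigma=\Sigma\partial_l$.
   Context: For a real antisymmetric $n\times n$ matrix $\theta$, $A_\theta$ is the unital dg-algebra over $\mathbb{R}$ generated by $x^1,\dots,x^n$ (degree $0$) and $\xi^1,\dots,\xi^n$ (degree $1$) with relations $x^ix^j-x^jx^i=\theta^{ij}$, $x^i\xi^j=\xi^jx^i$, $\xi^i\xi^j=0$, and differential $dx^i=\xi^i$, $d\xi^i=0$. As a vector space (for every $\theta$) $A_\theta$ is identified with the space of polynomials $a=a_0(x)+a_i(x)\xi^i$ in commuting $x$'s that are at most linear in the $\xi$'s (summation over repeated indices). $A_\theta[1]$ denotes the degree shift ($A_\theta[1]_k=(A_\theta)_{k+1}$), and $B^l(A_\theta)=A_\theta[1]^{\otimes l}$ with the differential induced by $d$ (with Koszul signs). $C^l=\mathrm{Hom}(B^l(A_\theta),A_{\theta'}[1])$ is the graded space of all linear maps, with differential $d_l(f)=f\circ d$. Let $\mathrm{B}$ be the graded space of expressions $\phi=\phi^0(p)+\phi^i(p)\zeta_i$,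 where $\phi^0,\phi^i$ are formal power series in commuting variables $p_1,\dots,p_n$ of degree $0$ and $\zeta_i$ have degree $-1$; its differential is $\partial\phi=p_i\phi^i(p)$. Put $\mathrm{B}^l=A_\theta\otimes\mathrm{B}^{\otimes l}$, with $A_\theta$ regarded as a complex with zero differential, the degree of $a\otimes\phi_1\otimes\cdots\otimes\phi_l$ being $\deg\phi_1+\cdots+\deg\phi_l+\deg a+l-1$, and with $\partial_l$ the tensor-product differential. $\mathbf{B}^l$ is the completion of $\mathrm{B}^l$ with respect to the descending filtration by powers of the $p$'s. For $\phi\in\mathrm{B}$, $\sigma(\phi):A_\theta\to (A_\theta)_0$ sends $a=a_0(x)+a_j(x)\xi^j$ to $\phi^0(\partial_1,\dots,\partial_n)a_0(x)+\phi^j(\partial_1,\dots,\partial_n)a_j(x)$, where $\partial_i=\partial/\partial x^i$. *)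

theory Defs
  imports Complex_Main "HOL-Library.Poly_Mapping"
begin

(* Variables are indexed by a finite type 'n (so n = CARD('n)).
   'n mon : monomials x^alpha (or p^beta), exponents alpha :: 'n =>0 nat
   'n pol : ordinary commutative real polynomials in x^1..x^n          *)
type_synonym 'n mon = "'n \<Rightarrow>\<^sub>0 nat"
type_synonym 'n pol = "'n mon \<Rightarrow>\<^sub>0 real"

(* An element a = a_0(x) + a_j(x) xi^j of A_theta (vector-space identification,
   independent of theta):  a None = a_0,  a (Some j) = a_j.                    *)
type_synonym 'n Aelt = "'n option \<Rightarrow> 'n pol"

(* An element phi = phi^0(p) + phi^i(p) zeta_i of B (formal power series):
   phi None = phi^0, phi (Some i) = phi^i, as coefficient functions.         *)
type_synonym 'n Belt = "'n option \<Rightarrow> 'n mon \<Rightarrow> real"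

(* index of the topological basis element zeta-part/p^beta of B *)
type_synonym 'n bidx = "'n option \<times> 'n mon"

definition smult :: "real \<Rightarrow> 'n pol \<Rightarrow> 'n pol" where
  "smult r P = Poly_Mapping.map (\<lambda>c. r * c) P"

definition addA :: "'n Aelt \<Rightarrow> 'n Aelt \<Rightarrow> 'n Aelt" where
  "addA a b = (\<lambda>u. a u + b u)"
definition scaleA :: "real \<Rightarrow> 'n Aelt \<Rightarrow> 'n Aelt" where
  "scaleA r a = (\<lambda>u. smult r (a u))"

(* partial derivative d^beta / dx^beta of a polynomial *)
definition pdiffs :: "'n::finite mon \<Rightarrow> 'n pol \<Rightarrow> 'n pol" where
  "pdiffs \<beta> P = (\<Sum>\<gamma>\<in>Poly_Mapping.keys P.
     if (\<forall>i. Poly_Mapping.lookup \<beta> i \<le> Poly_Mapping.lookup \<gamma> i)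
     then Poly_Mapping.single (\<gamma> - \<beta>)
            (Poly_Mapping.lookup P \<gamma> * (\<Prod>i\<in>UNIV. fact (Poly_Mapping.lookup \<gamma> i) / fact (Poly_Mapping.lookup \<gamma> i - Poly_Mapping.lookup \<beta> i)))
     else 0)"

definition pdiff :: "'n::finite \<Rightarrow> 'n pol \<Rightarrow> 'n pol" where
  "pdiff j P = pdiffs (Poly_Mapping.single j 1) P"

(* the differential of A_theta: d(a_0 + a_j xi^j) = (d_j a_0) xi^j *)
definition dA :: "'n::finite Aelt \<Rightarrow> 'n Aelt" where
  "dA a = (\<lambda>u. case u of None \<Rightarrow> 0 | Some j \<Rightarrow> pdiff j (a None))"

(* parity operator a |-> (-1)^deg a  on A *)
definition parA :: "'n Aelt \<Rightarrow> 'n Aelt" where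
  "parA a = (\<lambda>u. if u = None then a u else - a u)"

(* s(d/dx) P for a formal power series s(p) (finite sum, since d^beta P = 0
   for all but finitely many beta) *)
definition apply_series :: "('n::finite mon \<Rightarrow> real) \<Rightarrow> 'n pol \<Rightarrow> 'n pol" where
  "apply_series s P = (\<Sum>\<beta>\<in>{\<beta>. pdiffs \<beta> P \<noteq> 0}. smult (s \<beta>) (pdiffs \<beta> P))"

(* sigma(phi)(a) = phi^0(d) a_0 + phi^j(d) a_j *)
definition sigma :: "'n::finite Belt \<Rightarrow> 'n Aelt \<Rightarrow> 'n pol" where
  "sigma \<phi> a = apply_series (\<phi> None) (a None) + (\<Sum>j\<in>UNIV. apply_series (\<phi> (Some j)) (a (Some j)))"

definition bvec :: "'n bidx \<Rightarrow> 'n Belt" where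
  "bvec b = (\<lambda>u \<gamma>. if u = fst b \<and> \<gamma> = snd b then 1 else 0)"

(* Completion bold-B^l of A_theta (x) B^{(x) l}: since each piece of fixed p-degree
   is A (x) (finite-dim.), an element is uniquely the convergent sum
   Sum_b Phi(b) (x) bvec b_1 (x) ... (x) bvec b_l with arbitrary coefficients
   Phi(b) in A_theta; b ranges over lists of length l of basis indices of B. *)
definition Bcompl :: "nat \<Rightarrow> ('n bidx list \<Rightarrow> 'n Aelt) set" where
  "Bcompl l = {\<Phi>. \<forall>b. length b \<noteq> l \<longrightarrow> (\<forall>u. \<Phi> b u = 0)}"

(* C^l = Hom(A[1]^{(x) l}, A[1]) represented as l-multilinear maps A^l -> A *)
definition Ccx :: "nat \<Rightarrow> ('n Aelt list \<Rightarrow> 'n Aelt) set" where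
  "Ccx l = {f. (\<forall>as. length as \<noteq> l \<longrightarrow> (\<forall>u. f as u = 0)) \<and>
     (\<forall>as k a c r. length as = l \<and> k < l \<longrightarrow>
        f (as[k := addA (scaleA r a) c]) = addA (scaleA r (f (as[k := a]))) (f (as[k := c])))}"

definition Sig :: "nat \<Rightarrow> ('n::finite bidx list \<Rightarrow> 'n Aelt) \<Rightarrow> ('n Aelt list \<Rightarrow> 'n Aelt)" where
  "Sig l \<Phi> = (\<lambda>as u. if length as = l then
      (\<Sum>b\<in>{b. length b = l \<and> (\<forall>k<l. sigma (bvec (b!k)) (as!k) \<noteq> 0)}.
          \<Phi> b u * (\<Prod>k<l. sigma (bvec (b!k)) (as!k)))
     else 0)"

(* d_l f = f o d, where d on A[1]^{(x) l} is the Koszul-signed tensor differential: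
   d(a_1..a_l) = Sum_k (-1)^{|a_1|'+..+|a_{k-1}|'} a_1 .. d a_k .. a_l,
   |a|' = deg a - 1 the degree in A[1]; the sign is produced by the
   operator -parA on the preceding factors. *)
definition dC :: "nat \<Rightarrow> ('n::finite Aelt list \<Rightarrow> 'n Aelt) \<Rightarrow> ('n Aelt list \<Rightarrow> 'n Aelt)" where
  "dC l f = (\<lambda>as u. if length as = l then
      (\<Sum>k<l. f (map (\<lambda>a. - parA a) (take k as) @ [dA (as!k)] @ drop (Suc k) as) u)
     else 0)"

(* Koszul sign (-1)^{deg phi + 1} of a basis element of B (deg zeta_i = -1) *)
definition sgnB :: "'n bidx \<Rightarrow> real" where
  "sgnB b = (if fst b = None then -1 else 1)"

(* partial_l on the completion, in coordinates: dual of
   a (x) phi_1 .. phi_l |-> Sum_k (Koszul sign) a (x) .. (x) partial phi_k (x) ..,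
   partial(phi^0 + phi^i zeta_i) = p_i phi^i. *)
definition dB :: "nat \<Rightarrow> ('n::finite bidx list \<Rightarrow> 'n Aelt) \<Rightarrow> ('n bidx list \<Rightarrow> 'n Aelt)" where
  "dB l \<Phi> = (\<lambda>b u. if length b = l then
      (\<Sum>k<l. (case b!k of
         (None, \<beta>) \<Rightarrow> smult (\<Prod>m<k. sgnB (b!m))
             (\<Sum>i\<in>{i. 1 \<le> Poly_Mapping.lookup \<beta> i}. \<Phi> (b[k := (Some i, \<beta> - Poly_Mapping.single i 1)]) u)
       | (Some _, _) \<Rightarrow> 0))
     else 0)"

end

theory Submission
  imports Defs "HOL-Library.FuncSet"
begin


lemma smult_conv: "smult r P = Poly_Mapping.single 0 r * P"
  unfolding smult_def by (metis mult_map_scale_conv_mult)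

lemma lookup_smult[simp]: "Poly_Mapping.lookup (smult r P) k = r * Poly_Mapping.lookup P k"
  unfolding smult_def by (simp add: Poly_Mapping.map.rep_eq when_def)

definition le_mon :: "'n mon \<Rightarrow> 'n mon \<Rightarrow> bool" where
  "le_mon \<beta> \<gamma> = (\<forall>i. Poly_Mapping.lookup \<beta> i \<le> Poly_Mapping.lookup \<gamma> i)"

definition wc :: "'n::finite mon \<Rightarrow> 'n mon \<Rightarrow> real" where
  "wc \<beta> \<gamma> = (\<Prod>i\<in>UNIV. fact (Poly_Mapping.lookup \<gamma> i) / fact (Poly_Mapping.lookup \<gamma> i - Poly_Mapping.lookup \<beta> i))"

definition Tm :: "'n::finite mon \<Rightarrow> 'n mon \<Rightarrow> real \<Rightarrow> 'n pol" where
  "Tm \<beta> \<gamma> c = (if le_mon \<beta> \<gamma> then Poly_Mapping.single (\<gamma> - \<beta>) (c * wc \<beta> \<gamma>) else 0)"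

lemma pdiffs_Tm: "pdiffs \<beta> P = (\<Sum>\<gamma>\<in>Poly_Mapping.keys P. Tm \<beta> \<gamma> (Poly_Mapping.lookup P \<gamma>))"
  unfolding pdiffs_def Tm_def le_mon_def wc_def by simp

lemma Tm_0[simp]: "Tm \<beta> \<gamma> 0 = 0" by (simp add: Tm_def)
lemma Tm_add: "Tm \<beta> \<gamma> (a + b) = Tm \<beta> \<gamma> a + Tm \<beta> \<gamma> b"
  by (simp add: Tm_def distrib_right single_add)
lemma Tm_mult: "Tm \<beta> \<gamma> (r * a) = Poly_Mapping.single 0 r * Tm \<beta> \<gamma> a"
  by (simp add: Tm_def mult_single mult.assoc)

lemma pdiffs_superset:
  assumes "finite S" "Poly_Mapping.keys P \<subseteq> S"
  shows "pdiffs \<beta> P = (\<Sum>\<gamma>\<in>S. Tm \<beta> \<gamma> (Poly_Mapping.lookup P \<gamma>))"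
  unfolding pdiffs_Tm
  by (rule sum.mono_neutral_left) (use assms in \<open>auto simp: in_keys_iff\<close>)

lemma pdiffs_add: "pdiffs \<beta> (P + Q) = pdiffs \<beta> P + pdiffs \<beta> Q"
proof -
  let ?S = "Poly_Mapping.keys P \<union> Poly_Mapping.keys Q"
  have "pdiffs \<beta> (P + Q) = (\<Sum>\<gamma>\<in>?S. Tm \<beta> \<gamma> (Poly_Mapping.lookup (P+Q) \<gamma>))"
    by (rule pdiffs_superset) (insert keys_add[of P Q], auto)
  also have "\<dots> = (\<Sum>\<gamma>\<in>?S. Tm \<beta> \<gamma> (Poly_Mapping.lookup P \<gamma>)) + (\<Sum>\<gamma>\<in>?S. Tm \<beta> \<gamma> (Poly_Mapping.lookup Q \<gamma>))"
    by (simp add: lookup_add Tm_add sum.distrib)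
  also have "\<dots> = pdiffs \<beta> P + pdiffs \<beta> Q"
    by (simp add: pdiffs_superset[symmetric])
  finally show ?thesis .
qed

lemma pdiffs_smult: "pdiffs \<beta> (smult r P) = smult r (pdiffs \<beta> P)"
proof -
  have "pdiffs \<beta> (smult r P) = (\<Sum>\<gamma>\<in>Poly_Mapping.keys P. Tm \<beta> \<gamma> (Poly_Mapping.lookup (smult r P) \<gamma>))"
    by (rule pdiffs_superset) (auto simp: in_keys_iff)
  also have "\<dots> = smult r (pdiffs \<beta> P)"
    by (simp only: lookup_smult Tm_mult) (simp add: pdiffs_Tm smult_conv sum_distrib_left)
  finally show ?thesis .
qed

lemma pdiffs_0[simp]: "pdiffs \<beta> 0 = 0" by (simp add: pdiffs_def)

lemma pdiffs_sum: "pdiffs \<beta> (\<Sum>x\<in>A. f x) = (\<Sum>x\<in>A. pdiffs \<beta> (f x))"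
  by (induction A rule: infinite_finite_induct) (auto simp: pdiffs_add)

lemma pdiffs_single: "pdiffs \<beta> (Poly_Mapping.single \<gamma> c) = Tm \<beta> \<gamma> c"
  by (simp add: pdiffs_Tm)

lemma pm_expand: "P = (\<Sum>\<gamma>\<in>Poly_Mapping.keys P. Poly_Mapping.single \<gamma> (Poly_Mapping.lookup P \<gamma>))"
  by (rule poly_mapping_eqI) (auto simp: lookup_sum lookup_single when_def in_keys_iff)

lemma le_mon_finite: "finite {\<beta>::'n::finite mon. le_mon \<beta> \<gamma>}"
proof -
  have "{\<beta>. le_mon \<beta> \<gamma>} = Poly_Mapping.lookup -` (PiE UNIV (\<lambda>i. {..Poly_Mapping.lookup \<gamma> i}))"
    by (auto simp: le_mon_def PiE_def Pi_def extensional_def)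
  moreover have "finite (PiE (UNIV::'n set) (\<lambda>i. {..Poly_Mapping.lookup \<gamma> i}))"
    by (rule finite_PiE) auto
  ultimately show ?thesis
    by (metis finite_vimageI injI poly_mapping_eqI)
qed

lemma pdiffs_nz_finite: "finite {\<beta>. pdiffs \<beta> P \<noteq> 0}"
proof -
  have "{\<beta>. pdiffs \<beta> P \<noteq> 0} \<subseteq> (\<Union>\<gamma>\<in>Poly_Mapping.keys P. {\<beta>. le_mon \<beta> \<gamma>})"
  proof
    fix \<beta> assume "\<beta> \<in> {\<beta>. pdiffs \<beta> P \<noteq> 0}"
    then have "(\<Sum>\<gamma>\<in>Poly_Mapping.keys P. Tm \<beta> \<gamma> (Poly_Mapping.lookup P \<gamma>)) \<noteq> 0"
      by (simp add: pdiffs_Tm)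
    then obtain \<gamma> where "\<gamma> \<in> Poly_Mapping.keys P" "Tm \<beta> \<gamma> (Poly_Mapping.lookup P \<gamma>) \<noteq> 0"
      by (meson sum.neutral)
    then show "\<beta> \<in> (\<Union>\<gamma>\<in>Poly_Mapping.keys P. {\<beta>. le_mon \<beta> \<gamma>})"
      by (auto simp: Tm_def split: if_splits)
  qed
  then show ?thesis
    by (rule finite_subset) (auto intro: le_mon_finite)
qed

lemma smult_0[simp]: "smult 0 P = 0" by (simp add: smult_conv)

lemma apply_series_zero: "apply_series (\<lambda>_. 0) P = 0"
  by (simp add: apply_series_def)

lemma apply_series_ind: "apply_series (\<lambda>\<gamma>. if \<gamma> = \<beta> then 1 else 0) P = pdiffs \<beta> P"
proof -
  have "apply_series (\<lambda>\<gamma>. if \<gamma> = \<beta> then 1 else 0) P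
     = (\<Sum>\<gamma>\<in>{\<beta>. pdiffs \<beta> P \<noteq> 0}. if \<gamma> = \<beta> then pdiffs \<gamma> P else 0)"
    unfolding apply_series_def by (rule sum.cong) (auto simp: smult_conv)
  also have "\<dots> = pdiffs \<beta> P"
    using pdiffs_nz_finite[of P] by (simp add: sum.delta')
  finally show ?thesis .
qed

definition sg :: "'n::finite bidx \<Rightarrow> 'n Aelt \<Rightarrow> 'n pol" where
  "sg b a = pdiffs (snd b) (a (fst b))"

lemma sigma_bvec: "sigma (bvec b) a = sg b a"
proof (cases b)
  case (Pair ob \<beta>)
  show ?thesis
  proof (cases ob)
    case None
    then show ?thesis using Pair
      by (simp add: sigma_def bvec_def sg_def apply_series_zero apply_series_ind)
  next
    case (Some j)
    have "sigma (bvec b) a = (\<Sum>i\<in>UNIV. apply_series (\<lambda>\<gamma>. if i = j \<and> \<gamma> = \<beta> then 1 else 0) (a (Some i)))"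
      using Pair Some by (simp add: sigma_def bvec_def apply_series_zero)
    also have "\<dots> = (\<Sum>i\<in>UNIV. if i = j then pdiffs \<beta> (a (Some j)) else 0)"
      by (rule sum.cong) (auto simp: apply_series_zero apply_series_ind)
    finally have "sigma (bvec b) a = pdiffs \<beta> (a (Some j))" by simp
    then show ?thesis using Pair Some by (simp add: sg_def)
  qed
qed



definition PR :: "nat \<Rightarrow> 'n::finite Aelt list \<Rightarrow> 'n bidx list \<Rightarrow> 'n pol" where
  "PR l as b = (\<Prod>k<l. sg (b!k) (as!k))"

definition Zs :: "nat \<Rightarrow> 'n::finite Aelt list \<Rightarrow> 'n bidx list set" where
  "Zs l as = {b. length b = l \<and> (\<forall>k<l. sg (b!k) (as!k) \<noteq> 0)}"

lemma Sig_alt: "length as = l \<Longrightarrow> Sig l \<Phi> as u = (\<Sum>b\<in>Zs l as. \<Phi> b u * PR l as b)"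
  by (simp add: Sig_def Zs_def PR_def sigma_bvec)

lemma Sig_len: "length as \<noteq> l \<Longrightarrow> Sig l \<Phi> as u = 0"
  by (simp add: Sig_def)

lemma finite_lists_len: "finite A \<Longrightarrow> finite {b. set b \<subseteq> A \<and> length b = l}"
  by (rule finite_lists_length_eq)

lemma Zs_finite: "finite (Zs l as)"
proof -
  let ?A = "\<Union>k<l. \<Union>ob\<in>UNIV. {ob} \<times> {\<beta>. pdiffs \<beta> ((as!k) ob) \<noteq> 0}"
  have fA: "finite ?A" by (auto intro!: finite_UN_I pdiffs_nz_finite)
  have "Zs l as \<subseteq> {b. set b \<subseteq> ?A \<and> length b = l}"
  proof
    fix b assume b: "b \<in> Zs l as"
    have "set b \<subseteq> ?A"
    proof
      fix x assume "x \<in> set b"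
      then obtain k where k: "k < length b" "b!k = x" by (auto simp: in_set_conv_nth)
      with b have "sg x (as!k) \<noteq> 0" "k < l" by (auto simp: Zs_def)
      then show "x \<in> ?A" by (cases x) (auto simp: sg_def)
    qed
    with b show "b \<in> {b. set b \<subseteq> ?A \<and> length b = l}" by (auto simp: Zs_def)
  qed
  then show ?thesis using finite_lists_len[OF fA] by (rule finite_subset)
qed

lemma PR_zero: "length b = l \<Longrightarrow> b \<notin> Zs l as \<Longrightarrow> PR l as b = 0"
  unfolding PR_def Zs_def by (auto intro: prod_zero)

lemma Bcompl_zero: "\<Phi> \<in> Bcompl l \<Longrightarrow> length b \<noteq> l \<Longrightarrow> \<Phi> b u = 0"
  by (simp add: Bcompl_def)

lemma Sig_super:
  assumes "\<Phi> \<in> Bcompl l" "length as = l" "finite S" "Zs l as \<subseteq> S"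
  shows "Sig l \<Phi> as u = (\<Sum>b\<in>S. \<Phi> b u * PR l as b)"
  unfolding Sig_alt[OF assms(2)]
proof (rule sum.mono_neutral_left[OF assms(3,4)])
  show "\<forall>b\<in>S - Zs l as. \<Phi> b u * PR l as b = 0"
  proof
    fix b assume "b \<in> S - Zs l as"
    then show "\<Phi> b u * PR l as b = 0"
      using assms(1) by (cases "length b = l") (auto simp: PR_zero Bcompl_zero)
  qed
qed

lemma sg_lin: "sg b (addA (scaleA r a) c) = smult r (sg b a) + sg b c"
  by (simp add: sg_def addA_def scaleA_def pdiffs_add pdiffs_smult)

lemma PR_update:
  assumes "k < l" "length as = l"
  shows "PR l (as[k := x]) b = sg (b!k) x * (\<Prod>m\<in>{..<l}-{k}. sg (b!m) (as!m))"
proof -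
  have "PR l (as[k := x]) b = sg (b!k) (as[k:=x]!k) * (\<Prod>m\<in>{..<l}-{k}. sg (b!m) (as[k:=x]!m))"
    unfolding PR_def using assms by (simp add: prod.remove)
  also have "\<dots> = sg (b!k) x * (\<Prod>m\<in>{..<l}-{k}. sg (b!m) (as!m))"
    using assms by (auto intro!: prod.cong)
  finally show ?thesis .
qed



lemma Sig_multilinear:
  fixes \<Phi> :: "'n::finite bidx list \<Rightarrow> 'n Aelt"
  assumes Phi: "\<Phi> \<in> Bcompl l"
  shows "Sig l \<Phi> \<in> Ccx l"
  unfolding Ccx_def
proof (intro CollectI conjI allI impI)
  fix as :: "'n Aelt list" and u assume "length as \<noteq> l"
  then show "Sig l \<Phi> as u = 0" by (rule Sig_len)
next
  fix as :: "'n Aelt list" and k :: nat and a c :: "'n Aelt" and r :: real assume H: "length as = l \<and> k < l"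
  let ?x = "addA (scaleA r a) c"
  let ?S = "Zs l (as[k:=?x]) \<union> Zs l (as[k:=a]) \<union> Zs l (as[k:=c])"
  have fS: "finite ?S" by (simp add: Zs_finite)
  let ?R = "\<lambda>b. (\<Prod>m\<in>{..<l}-{k}. sg (b!m) (as!m))"
  show "Sig l \<Phi> (as[k := ?x]) = addA (scaleA r (Sig l \<Phi> (as[k := a]))) (Sig l \<Phi> (as[k := c]))"
  proof (rule ext)
    fix u
    have e1: "Sig l \<Phi> (as[k := y]) u = (\<Sum>b\<in>?S. \<Phi> b u * (sg (b!k) y * ?R b))"
      if "y = ?x \<or> y = a \<or> y = c" for y
      using that H by (subst Sig_super[OF Phi _ fS]) (auto simp: PR_update)
    have "Sig l \<Phi> (as[k := ?x]) u = (\<Sum>b\<in>?S. \<Phi> b u * (sg (b!k) ?x * ?R b))"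
      by (rule e1) simp
    also have "\<dots> = smult r (Sig l \<Phi> (as[k := a]) u) + Sig l \<Phi> (as[k := c]) u"
      by (simp only: e1[of a, simplified] e1[of c, simplified] sg_lin) (simp add: smult_conv sum_distrib_left sum.distrib[symmetric] algebra_simps)
    also have "\<dots> = addA (scaleA r (Sig l \<Phi> (as[k := a]))) (Sig l \<Phi> (as[k := c])) u"
      by (simp add: addA_def scaleA_def)
    finally show "Sig l \<Phi> (as[k := ?x]) u = addA (scaleA r (Sig l \<Phi> (as[k := a]))) (Sig l \<Phi> (as[k := c])) u" .
  qed
qed

lemma Sig_lin:
  fixes \<Phi> :: "'n::finite bidx list \<Rightarrow> 'n Aelt"
  assumes "\<Phi> \<in> Bcompl l" "\<Psi> \<in> Bcompl l"
  shows "Sig l (\<lambda>b. addA (scaleA r (\<Phi> b)) (\<Psi> b)) = (\<lambda>as. addA (scaleA r (Sig l \<Phi> as)) (Sig l \<Psi> as))"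
proof (intro ext)
  fix as :: "'n Aelt list" and u
  show "Sig l (\<lambda>b. addA (scaleA r (\<Phi> b)) (\<Psi> b)) as u = addA (scaleA r (Sig l \<Phi> as)) (Sig l \<Psi> as) u"
  proof (cases "length as = l")
    case True
    then show ?thesis unfolding addA_def scaleA_def
      by (simp add: Sig_alt smult_conv sum_distrib_left sum.distrib[symmetric] algebra_simps)
  next
    case False
    then show ?thesis by (simp add: Sig_len addA_def scaleA_def smult_conv)
  qed
qed



lemma mon_add_sub: "(\<beta> + \<gamma>) - \<gamma> = (\<beta>::'n mon)"
  by (rule poly_mapping_eqI) (simp add: lookup_add lookup_minus)

lemma mon_sub_add: "le_mon \<gamma> \<beta> \<Longrightarrow> (\<beta> - \<gamma>) + \<gamma> = (\<beta>::'n mon)"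
  by (rule poly_mapping_eqI) (simp add: lookup_add lookup_minus le_mon_def)

lemma Tm_comp:
  fixes \<beta> \<gamma> \<delta> :: "'n::finite mon"
  shows "pdiffs \<beta> (Tm \<gamma> \<delta> c) = Tm (\<beta> + \<gamma>) \<delta> c"
proof (cases "le_mon \<gamma> \<delta>")
  case True
  have le: "le_mon \<beta> (\<delta> - \<gamma>) \<longleftrightarrow> le_mon (\<beta> + \<gamma>) \<delta>"
    using True by (auto simp: le_mon_def lookup_add lookup_minus) (metis le_diff_conv2 add.commute)+
  have m: "\<delta> - \<gamma> - \<beta> = \<delta> - (\<beta> + \<gamma>)"
    by (rule poly_mapping_eqI) (simp add: lookup_add lookup_minus)
  have w: "wc \<gamma> \<delta> * wc \<beta> (\<delta> - \<gamma>) = wc (\<beta> + \<gamma>) \<delta>"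
      unfolding wc_def prod.distrib[symmetric]
    proof (rule prod.cong[OF refl])
      fix i
      let ?d = "Poly_Mapping.lookup \<delta> i" and ?g = "Poly_Mapping.lookup \<gamma> i" and ?b = "Poly_Mapping.lookup \<beta> i"
      have "(fact ?d / fact (?d - ?g)) * (fact (?d - ?g) / fact (?d - ?g - ?b)) = (fact ?d / fact (?d - (?b + ?g)) :: real)"
        by (simp add: diff_diff_add add.commute)
      then show "fact ?d / fact (?d - ?g) * (fact (Poly_Mapping.lookup (\<delta> - \<gamma>) i) / fact (Poly_Mapping.lookup (\<delta> - \<gamma>) i - ?b)) =
         (fact ?d / fact (?d - Poly_Mapping.lookup (\<beta> + \<gamma>) i) :: real)"
        by (simp add: lookup_add lookup_minus)
    qed
  show ?thesis
  proof (cases "le_mon (\<beta> + \<gamma>) \<delta>")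
    case T2: True
    then show ?thesis using True le m w
      by (simp add: Tm_def pdiffs_single mult.assoc)
  next
    case False
    then show ?thesis using True le
      by (simp add: Tm_def pdiffs_single)
  qed
next
  case False
  then have "\<not> le_mon (\<beta> + \<gamma>) \<delta>"
    by (auto simp: le_mon_def lookup_add) (meson le_add2 order_trans)
  with False show ?thesis by (simp add: Tm_def)
qed

lemma pdiffs_pdiffs: "pdiffs \<beta> (pdiffs \<gamma> P) = pdiffs (\<beta> + \<gamma>) P"
  by (simp add: pdiffs_Tm[of \<gamma>] pdiffs_Tm[of "\<beta>+\<gamma>"] pdiffs_sum Tm_comp)

lemma smult_m1: "smult (-1) P = - P"
  by (simp add: smult_conv single_uminus)

lemma pdiffs_uminus: "pdiffs \<beta> (- P) = - pdiffs \<beta> P"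
  by (metis pdiffs_smult smult_m1)

lemma smult_1[simp]: "smult 1 P = P"
  by (simp add: smult_conv)

lemma sg_neg_par: "sg b (- parA a) = smult (sgnB b) (sg b a)"
  by (cases b; cases "fst b") (auto simp: sg_def parA_def sgnB_def pdiffs_uminus smult_m1)

lemma sg_dA: "sg b (dA a) = (case fst b of None \<Rightarrow> 0 | Some j \<Rightarrow> sg (None, snd b + Poly_Mapping.single j 1) a)"
  by (cases b; cases "fst b") (auto simp: sg_def dA_def pdiff_def pdiffs_pdiffs)

lemma prod_single0: "(\<Prod>m\<in>A. Poly_Mapping.single 0 (f m) :: 'n pol) = Poly_Mapping.single 0 (\<Prod>m\<in>A. f m)"
  by (induction A rule: infinite_finite_induct) (auto simp: mult_single)

definition ask :: "nat \<Rightarrow> 'n::finite Aelt list \<Rightarrow> 'n Aelt list" where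
  "ask k as = map (\<lambda>a. - parA a) (take k as) @ [dA (as!k)] @ drop (Suc k) as"

lemma ask_len: "k < length as \<Longrightarrow> length (ask k as) = length as"
  by (simp add: ask_def)

lemma ask_nth: "k < length as \<Longrightarrow> m < length as \<Longrightarrow>
   ask k as ! m = (if m < k then - parA (as!m) else if m = k then dA (as!k) else as!m)"
  by (auto simp: ask_def nth_append min_def nth_Cons' )



definition sk :: "nat \<Rightarrow> 'n bidx list \<Rightarrow> real" where
  "sk k b = (\<Prod>m<k. sgnB (b!m))"

lemma PR_shift:
  assumes "k < l" "length as = l" "b!k = (Some j, \<beta>)" "length b = l"
  shows "PR l (ask k as) b = smult (sk k b) (PR l as (b[k := (None, \<beta> + Poly_Mapping.single j 1)]))"
proof -
  let ?b' = "b[k := (None, \<beta> + Poly_Mapping.single j 1)]"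
  let ?s = "\<lambda>m. if m < k then sgnB (b!m) else 1"
  have "PR l (ask k as) b = (\<Prod>m<l. Poly_Mapping.single 0 (?s m) * sg (?b'!m) (as!m))"
    unfolding PR_def
  proof (rule prod.cong[OF refl])
    fix m assume "m \<in> {..<l}"
    then have m: "m < l" by simp
    show "sg (b!m) (ask k as ! m) = Poly_Mapping.single 0 (?s m) * sg (?b'!m) (as!m)"
      using assms m by (auto simp: ask_nth sg_neg_par smult_conv sg_dA nth_list_update)
  qed
  also have "\<dots> = Poly_Mapping.single 0 (\<Prod>m<l. ?s m) * PR l as ?b'"
    by (simp add: prod.distrib prod_single0 PR_def)
  also have "(\<Prod>m<l. ?s m) = sk k b"
  proof -
    have "(\<Prod>m<l. ?s m) = (\<Prod>m\<in>{m\<in>{..<l}. m < k}. sgnB (b!m))"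
      by (rule prod.inter_filter[symmetric]) simp
    also have "{m\<in>{..<l}. m < k} = {..<k}" using assms by auto
    finally show ?thesis by (simp add: sk_def)
  qed
  finally show ?thesis by (simp add: smult_conv)
qed



lemma smult_zero2[simp]: "smult r 0 = 0" by (simp add: smult_conv)

lemma sum_supp:
  assumes "finite A" "finite B" "\<forall>x\<in>A. g x \<noteq> 0 \<longrightarrow> x \<in> B" "\<forall>x\<in>B. g x \<noteq> 0 \<longrightarrow> x \<in> A"
  shows "sum g A = sum g B"
proof -
  have "sum g A = sum g (A \<inter> B)"
    by (rule sum.mono_neutral_right) (use assms in auto)
  also have "\<dots> = sum g B"
    by (rule sum.mono_neutral_left) (use assms in auto)
  finally show ?thesis .
qed

lemma PR_shift_None:
  assumes "k < l" "length as = l" "fst (b!k) = None"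
  shows "PR l (ask k as) b = 0"
  unfolding PR_def
  by (rule prod_zero) (use assms in \<open>auto simp: ask_nth sg_dA intro!: bexI[of _ k]\<close>)

lemma PR_nz_Zs: "length b = l \<Longrightarrow> PR l as b \<noteq> 0 \<Longrightarrow> b \<in> Zs l as"
  using PR_zero by blast

definition DT :: "('n::finite bidx list \<Rightarrow> 'n Aelt) \<Rightarrow> 'n option \<Rightarrow> nat \<Rightarrow> 'n bidx list \<Rightarrow> 'n pol" where
  "DT \<Phi> u k b = (if fst (b!k) = None then smult (sk k b)
      (\<Sum>i\<in>{i. 1 \<le> Poly_Mapping.lookup (snd (b!k)) i}. \<Phi> (b[k := (Some i, snd (b!k) - Poly_Mapping.single i 1)]) u) else 0)"

lemma dB_alt: "length b = l \<Longrightarrow> dB l \<Phi> b u = (\<Sum>k<l. DT \<Phi> u k b)"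
  unfolding dB_def DT_def sk_def
  by (auto intro!: sum.cong split: prod.splits option.splits)

lemma le_mon_single: "1 \<le> Poly_Mapping.lookup \<beta> i \<Longrightarrow> le_mon (Poly_Mapping.single i 1) \<beta>"
  by (auto simp: le_mon_def lookup_single when_def)

lemma key:
  fixes \<Phi> :: "'n::finite bidx list \<Rightarrow> 'n Aelt"
  assumes Phi: "\<Phi> \<in> Bcompl l" and kl: "k < l" and len: "length as = l"
  shows "Sig l \<Phi> (ask k as) u = (\<Sum>b\<in>Zs l as. DT \<Phi> u k b * PR l as b)"
proof -
  define J where "J b = (if fst (b!k) = None then {i. 1 \<le> Poly_Mapping.lookup (snd (b!k)) i} else {})" for b :: "'n bidx list"
  define Q where "Q = Sigma (Zs l as) J"
  define h where "h q = (fst q)[k := (Some (snd q), snd (fst q ! k) - Poly_Mapping.single (snd q) 1)]" for q :: "'n bidx list \<times> 'n"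
  define G where "G q = smult (sk k (fst q)) (\<Phi> (h q) u) * PR l as (fst q)" for q
  define G' where "G' b = \<Phi> b u * PR l (ask k as) b" for b
  have fQ: "finite Q" unfolding Q_def by (auto intro: Zs_finite)
  have lenask: "length (ask k as) = l" using kl len by (simp add: ask_len)
  have "(\<Sum>b\<in>Zs l as. DT \<Phi> u k b * PR l as b) = (\<Sum>b\<in>Zs l as. \<Sum>i\<in>J b. G (b, i))"
  proof (rule sum.cong[OF refl])
    fix b
    show "DT \<Phi> u k b * PR l as b = (\<Sum>i\<in>J b. G (b, i))"
      by (simp add: DT_def J_def G_def h_def smult_conv sum_distrib_left sum_distrib_right mult.assoc)
  qed
  also have "\<dots> = (\<Sum>q\<in>Q. G q)"
    unfolding Q_def by (subst sum.Sigma) (auto intro: Zs_finite)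
  also have "\<dots> = (\<Sum>q\<in>Q. G' (h q))"
  proof (rule sum.cong[OF refl])
    fix q assume "q \<in> Q"
    then obtain b i where q: "q = (b, i)" and b: "b \<in> Zs l as" and i: "i \<in> J b"
      unfolding Q_def by auto
    have lb: "length b = l" using b by (simp add: Zs_def)
    obtain \<beta> where bk: "b!k = (None, \<beta>)" and bi: "1 \<le> Poly_Mapping.lookup \<beta> i"
      using i unfolding J_def by (cases "b!k") (auto split: if_splits)
    have hq: "h q = b[k := (Some i, \<beta> - Poly_Mapping.single i 1)]"
      by (simp add: h_def q bk)
    have hk: "h q ! k = (Some i, \<beta> - Poly_Mapping.single i 1)" using hq lb kl by simp
    have lh: "length (h q) = l" using hq lb by simp
    have e1: "(h q)[k := (None, (\<beta> - Poly_Mapping.single i 1) + Poly_Mapping.single i 1)] = b"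
    proof -
      have "(h q)[k := (None, (\<beta> - Poly_Mapping.single i 1) + Poly_Mapping.single i 1)] = b[k := b!k]"
        using hq bk mon_sub_add[OF le_mon_single[OF bi]] by simp
      then show ?thesis by simp
    qed
    have e2: "sk k (h q) = sk k b"
      unfolding sk_def hq by (rule prod.cong) auto
    show "G q = G' (h q)"
      unfolding G_def G'_def
      using PR_shift[OF kl len hk lh] e1 e2 q by (simp add: smult_conv algebra_simps)
  qed
  also have "\<dots> = (\<Sum>x\<in>h ` Q. G' x)"
  proof -
  have "inj_on h Q"
  proof (rule inj_onI)
    fix q q' assume "q \<in> Q" "q' \<in> Q" and eq: "h q = h q'"
    then obtain b i b' i' where q: "q = (b, i)" "b \<in> Zs l as" "i \<in> J b"
        and q': "q' = (b', i')" "b' \<in> Zs l as" "i' \<in> J b'"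
      unfolding Q_def by auto
    have lb: "length b = l" "length b' = l" using q q' by (auto simp: Zs_def)
    obtain \<beta> where bk: "b!k = (None, \<beta>)" and bi: "1 \<le> Poly_Mapping.lookup \<beta> i"
      using q unfolding J_def by (cases "b!k") (auto split: if_splits)
    obtain \<beta>' where bk': "b'!k = (None, \<beta>')" and bi': "1 \<le> Poly_Mapping.lookup \<beta>' i'"
      using q' unfolding J_def by (cases "b'!k") (auto split: if_splits)
    have "h q ! k = h q' ! k" using eq by simp
    then have ii: "i = i'" and bb: "\<beta> - Poly_Mapping.single i 1 = \<beta>' - Poly_Mapping.single i' 1"
      using q q' bk bk' lb kl by (auto simp: h_def)
    have "\<beta> = \<beta>'"
      using mon_sub_add[OF le_mon_single[OF bi]] mon_sub_add[OF le_mon_single[OF bi']] bb ii by metis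
    have "b = b'"
    proof (rule nth_equalityI)
      show "length b = length b'" using lb by simp
      fix m assume m: "m < length b"
      show "b!m = b'!m"
      proof (cases "m = k")
        case True then show ?thesis using bk bk' \<open>\<beta> = \<beta>'\<close> by simp
      next
        case False
        have "h q ! m = h q' ! m" using eq by simp
        then show ?thesis using False q q' by (simp add: h_def)
      qed
    qed
    then show "q = q'" using q q' ii by simp
  qed
  then show ?thesis by (simp add: sum.reindex)
  qed
  also have "\<dots> = (\<Sum>x\<in>Zs l (ask k as). G' x)"
  proof (rule sum_supp)
    show "finite (h ` Q)" using fQ by simp
    show "finite (Zs l (ask k as))" by (rule Zs_finite)
    show "\<forall>x\<in>h ` Q. G' x \<noteq> 0 \<longrightarrow> x \<in> Zs l (ask k as)"
    proof (intro ballI impI)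
      fix x assume x: "x \<in> h ` Q" and nz: "G' x \<noteq> 0"
      then obtain b i where "x = h (b, i)" "b \<in> Zs l as" unfolding Q_def by auto
      then have "length x = l" by (simp add: h_def Zs_def)
      moreover have "PR l (ask k as) x \<noteq> 0" using nz by (auto simp: G'_def)
      ultimately show "x \<in> Zs l (ask k as)" by (rule PR_nz_Zs)
    qed
    show "\<forall>x\<in>Zs l (ask k as). G' x \<noteq> 0 \<longrightarrow> x \<in> h ` Q"
    proof (intro ballI impI)
      fix x assume x: "x \<in> Zs l (ask k as)" and nz: "G' x \<noteq> 0"
      have lx: "length x = l" using x by (simp add: Zs_def)
      have pnz: "PR l (ask k as) x \<noteq> 0" using nz by (auto simp: G'_def)
      obtain ob \<beta> where xk: "x!k = (ob, \<beta>)" by (cases "x!k")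
      show "x \<in> h ` Q"
      proof (cases ob)
        case None
        then show ?thesis using PR_shift_None[OF kl len, of x] xk pnz by simp
      next
        case (Some j)
        let ?b = "x[k := (None, \<beta> + Poly_Mapping.single j 1)]"
        have "PR l as ?b \<noteq> 0" using PR_shift[OF kl len _ lx, of j \<beta>] xk Some pnz by auto
        then have bZ: "?b \<in> Zs l as" using lx by (intro PR_nz_Zs) auto
        have jJ: "j \<in> J ?b" using lx kl by (simp add: J_def lookup_add)
        have "h (?b, j) = x[k := x!k]"
          using lx kl xk Some by (simp add: h_def mon_add_sub)
        then have "h (?b, j) = x" by simp
        then show ?thesis using bZ jJ unfolding Q_def by (metis SigmaI image_eqI)
      qed
    qed
  qed
  also have "\<dots> = Sig l \<Phi> (ask k as) u"
    unfolding G'_def by (rule Sig_alt[symmetric, OF lenask])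
  finally show ?thesis by simp
qed



lemma dC_Sig:
  fixes \<Phi> :: "'n::finite bidx list \<Rightarrow> 'n Aelt"
  assumes Phi: "\<Phi> \<in> Bcompl l"
  shows "dC l (Sig l \<Phi>) = Sig l (dB l \<Phi>)"
proof (intro ext)
  fix as :: "'n Aelt list" and u
  show "dC l (Sig l \<Phi>) as u = Sig l (dB l \<Phi>) as u"
  proof (cases "length as = l")
    case True
    have "dC l (Sig l \<Phi>) as u = (\<Sum>k<l. Sig l \<Phi> (ask k as) u)"
      using True by (simp add: dC_def ask_def)
    also have "\<dots> = (\<Sum>k<l. \<Sum>b\<in>Zs l as. DT \<Phi> u k b * PR l as b)"
      using True by (intro sum.cong refl key[OF Phi]) auto
    also have "\<dots> = (\<Sum>b\<in>Zs l as. \<Sum>k<l. DT \<Phi> u k b * PR l as b)"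
      by (rule sum.swap)
    also have "\<dots> = (\<Sum>b\<in>Zs l as. dB l \<Phi> b u * PR l as b)"
      by (intro sum.cong refl) (simp add: dB_alt Zs_def sum_distrib_right)
    also have "\<dots> = Sig l (dB l \<Phi>) as u"
      using True by (simp add: Sig_alt)
    finally show ?thesis .
  next
    case False
    then show ?thesis by (simp add: dC_def Sig_len)
  qed
qed



definition eA :: "'n bidx \<Rightarrow> 'n Aelt" where
  "eA x = (\<lambda>v. if v = fst x then Poly_Mapping.single (snd x) 1 else 0)"

lemma wc_pos: "wc \<beta> \<alpha> > 0"
  unfolding wc_def by (intro prod_pos) (simp add: divide_pos_pos)

lemma sg_eA: "sg b (eA x) = (if fst b = fst x \<and> le_mon (snd b) (snd x)
    then Poly_Mapping.single (snd x - snd b) (wc (snd b) (snd x)) else 0)"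
  by (auto simp: sg_def eA_def pdiffs_single Tm_def)

lemma single_nz: "c \<noteq> 0 \<Longrightarrow> Poly_Mapping.single x c \<noteq> 0"
  by (metis lookup_single_eq lookup_zero)

lemma sg_eA_nz: "sg b (eA x) \<noteq> 0 \<longleftrightarrow> fst b = fst x \<and> le_mon (snd b) (snd x)"
  using wc_pos[of "snd b" "snd x"] single_nz[of "wc (snd b) (snd x)" "snd x - snd b"] by (auto simp: sg_eA)

definition degm :: "'n::finite mon \<Rightarrow> nat" where
  "degm \<alpha> = (\<Sum>i\<in>UNIV. Poly_Mapping.lookup \<alpha> i)"

definition degL :: "'n::finite bidx list \<Rightarrow> nat" where
  "degL b = (\<Sum>k<length b. degm (snd (b!k)))"

lemma degm_le: "le_mon \<beta> \<alpha> \<Longrightarrow> degm \<beta> \<le> degm \<alpha>"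
  unfolding degm_def le_mon_def by (intro sum_mono) auto

lemma degm_less: "le_mon \<beta> \<alpha> \<Longrightarrow> \<beta> \<noteq> \<alpha> \<Longrightarrow> degm \<beta> < degm \<alpha>"
proof -
  assume le: "le_mon \<beta> \<alpha>" and ne: "\<beta> \<noteq> \<alpha>"
  have "\<exists>i. Poly_Mapping.lookup \<beta> i \<noteq> Poly_Mapping.lookup \<alpha> i"
  proof (rule ccontr)
    assume "\<not> ?thesis"
    then have "\<beta> = \<alpha>" by (intro poly_mapping_eqI) auto
    with ne show False by simp
  qed
  then obtain i where "Poly_Mapping.lookup \<beta> i \<noteq> Poly_Mapping.lookup \<alpha> i" by blast
  with le have "Poly_Mapping.lookup \<beta> i < Poly_Mapping.lookup \<alpha> i"
    by (auto simp: le_mon_def le_neq_implies_less)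
  then show ?thesis unfolding degm_def
    by (intro sum_strict_mono_ex1) (use le in \<open>auto simp: le_mon_def\<close>)
qed

lemma Zs_eA: "length a = l \<Longrightarrow> b \<in> Zs l (map eA a) \<longleftrightarrow>
   length b = l \<and> (\<forall>k<l. fst (b!k) = fst (a!k) \<and> le_mon (snd (b!k)) (snd (a!k)))"
  by (auto simp: Zs_def sg_eA_nz)

lemma degL_less:
  assumes "length a = l" "b \<in> Zs l (map eA a)" "b \<noteq> a"
  shows "degL b < degL a"
proof -
  have H: "length b = l" "\<forall>k<l. fst (b!k) = fst (a!k) \<and> le_mon (snd (b!k)) (snd (a!k))"
    using assms Zs_eA by blast+
  have "\<exists>k<l. b!k \<noteq> a!k"
  proof (rule ccontr)
    assume "\<not> ?thesis"
    then have "b = a" using assms(1) H(1) by (intro nth_equalityI) auto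
    with assms(3) show False by simp
  qed
  then obtain k where k: "k < l" "b!k \<noteq> a!k" by blast
  then have "snd (b!k) \<noteq> snd (a!k)" using H by (metis prod.expand)
  then have "degm (snd (b!k)) < degm (snd (a!k))" using H k by (intro degm_less) auto
  then show ?thesis unfolding degL_def H(1) assms(1) using H k
    by (intro sum_strict_mono_ex1) (auto intro: degm_le)
qed

definition Kd :: "'n::finite bidx list \<Rightarrow> real" where
  "Kd a = (\<Prod>k<length a. wc (snd (a!k)) (snd (a!k)))"

lemma Kd_nz: "Kd a \<noteq> 0"
proof -
  have "Kd a > 0" unfolding Kd_def by (intro prod_pos) (simp add: wc_pos)
  then show ?thesis by simp
qed

lemma PR_diag: "length a = l \<Longrightarrow> PR l (map eA a) a = Poly_Mapping.single 0 (Kd a)"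
  unfolding PR_def Kd_def by (simp add: sg_eA le_mon_def prod_single0)

lemma a_in_Zs: "length a = l \<Longrightarrow> a \<in> Zs l (map eA a)"
  by (simp add: Zs_eA le_mon_def)

lemma Sig_tri:
  assumes "length a = l"
  shows "Sig l \<Phi> (map eA a) u = \<Phi> a u * Poly_Mapping.single 0 (Kd a)
     + (\<Sum>b\<in>Zs l (map eA a) - {a}. \<Phi> b u * PR l (map eA a) b)"
  using assms by (simp add: Sig_alt sum.remove[OF Zs_finite a_in_Zs] PR_diag)

lemma cancel_K: "X * Poly_Mapping.single 0 (c::real) = Y * Poly_Mapping.single 0 c \<Longrightarrow> c \<noteq> 0 \<Longrightarrow> X = (Y :: 'n pol)"
proof -
  assume h: "X * Poly_Mapping.single 0 c = Y * Poly_Mapping.single 0 c" and c: "c \<noteq> 0"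
  have "X = X * Poly_Mapping.single 0 c * Poly_Mapping.single 0 (1/c)"
    using c by (simp add: mult.assoc mult_single)
  also have "\<dots> = Y" using h c by (simp add: mult.assoc mult_single)
  finally show ?thesis .
qed

lemma Sig_inj:
  fixes \<Phi> \<Psi> :: "'n::finite bidx list \<Rightarrow> 'n Aelt"
  assumes "\<Phi> \<in> Bcompl l" "\<Psi> \<in> Bcompl l" "Sig l \<Phi> = Sig l \<Psi>"
  shows "\<Phi> = \<Psi>"
proof -
  have "\<forall>u. \<Phi> a u = \<Psi> a u" if "length a = l" for a
    using that
  proof (induction a rule: measure_induct_rule[of degL])
    case (less a)
    show ?case
    proof
      fix u
      have IH: "\<Phi> b u = \<Psi> b u" if "b \<in> Zs l (map eA a) - {a}" for b
        using less.IH[of b] that degL_less[OF less.prems] by (auto simp: Zs_def)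
      have "Sig l \<Phi> (map eA a) u = Sig l \<Psi> (map eA a) u" using assms(3) by simp
      then have "\<Phi> a u * Poly_Mapping.single 0 (Kd a) = \<Psi> a u * Poly_Mapping.single 0 (Kd a)"
        unfolding Sig_tri[OF less.prems]
        using sum.cong[OF refl, of "Zs l (map eA a) - {a}" "\<lambda>b. \<Phi> b u * PR l (map eA a) b" "\<lambda>b. \<Psi> b u * PR l (map eA a) b"] IH
        by simp
      then show "\<Phi> a u = \<Psi> a u" using Kd_nz by (rule cancel_K)
    qed
  qed
  then show ?thesis using assms(1,2) by (intro ext) (metis Bcompl_zero)
qed



function invF :: "nat \<Rightarrow> ('n::finite Aelt list \<Rightarrow> 'n Aelt) \<Rightarrow> 'n bidx list \<Rightarrow> 'n option \<Rightarrow> 'n pol" where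
  "invF l f a u = (if length a = l then smult (1 / Kd a) (f (map eA a) u
      - (\<Sum>b\<in>Zs l (map eA a) - {a}. invF l f b u * PR l (map eA a) b)) else 0)"
  by auto
termination
  by (relation "measure (\<lambda>(l, f, a, u). degL a)") (auto intro: degL_less)

declare invF.simps[simp del]

lemma invF_Bcompl: "invF l f \<in> Bcompl l"
  by (simp add: Bcompl_def invF.simps)

lemma invF_basis:
  assumes "length a = l"
  shows "Sig l (invF l f) (map eA a) u = f (map eA a) u"
proof -
  let ?R = "(\<Sum>b\<in>Zs l (map eA a) - {a}. invF l f b u * PR l (map eA a) b)"
  have "Sig l (invF l f) (map eA a) u = invF l f a u * Poly_Mapping.single 0 (Kd a) + ?R"
    by (rule Sig_tri[OF assms])
  also have "invF l f a u = smult (1 / Kd a) (f (map eA a) u - ?R)"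
    using assms by (simp add: invF.simps)
  also have "smult (1 / Kd a) (f (map eA a) u - ?R) * Poly_Mapping.single 0 (Kd a) = f (map eA a) u - ?R"
  proof -
    have one: "Poly_Mapping.single 0 (Kd a) * Poly_Mapping.single 0 (1 / Kd a) = (1::'n pol)"
      using Kd_nz[of a] by (simp add: mult_single)
    have "smult (1 / Kd a) (f (map eA a) u - ?R) * Poly_Mapping.single 0 (Kd a)
       = (Poly_Mapping.single 0 (Kd a) * Poly_Mapping.single 0 (1 / Kd a)) * (f (map eA a) u - ?R)"
      by (simp add: smult_conv algebra_simps)
    also have "\<dots> = f (map eA a) u - ?R" unfolding one by simp
    finally show ?thesis .
  qed
  finally show ?thesis by simp
qed

inductive gen :: "'n Aelt \<Rightarrow> bool" where
  gen_basis: "gen (eA x)"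
| gen_comb: "gen a \<Longrightarrow> gen c \<Longrightarrow> gen (addA (scaleA r a) c)"

lemma gen_zero: "gen ((\<lambda>_. 0) :: 'n Aelt)"
proof -
  have e: "addA (scaleA (-1) (eA x)) (eA x) = (\<lambda>_. 0)" for x :: "'n bidx"
    by (auto simp: addA_def scaleA_def smult_m1)
  have "gen (addA (scaleA (-1) (eA undefined)) (eA undefined) :: 'n Aelt)"
    by (intro gen_comb gen_basis)
  then show ?thesis unfolding e .
qed

lemma smult_single: "smult c (Poly_Mapping.single \<gamma> 1) = Poly_Mapping.single \<gamma> c"
  by (simp add: smult_conv mult_single)

lemma gen_embed_sum:
  fixes w :: "'n option" and c :: "'n mon \<Rightarrow> real"
  assumes "finite S"
  shows "gen (\<lambda>v. if v = w then (\<Sum>\<gamma>\<in>S. Poly_Mapping.single \<gamma> (c \<gamma>)) else 0)"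
  using assms
proof (induction S rule: finite_induct)
  case empty
  have "(\<lambda>v. if v = w then (\<Sum>\<gamma>\<in>{}. Poly_Mapping.single \<gamma> (c \<gamma>)) else 0) = ((\<lambda>_. 0) :: 'n Aelt)"
    by (rule ext) simp
  then show ?case using gen_zero by simp
next
  case (insert \<gamma> S)
  have "(\<lambda>v. if v = w then (\<Sum>\<gamma>\<in>insert \<gamma> S. Poly_Mapping.single \<gamma> (c \<gamma>)) else 0)
      = addA (scaleA (c \<gamma>) (eA (w, \<gamma>))) (\<lambda>v. if v = w then (\<Sum>\<gamma>\<in>S. Poly_Mapping.single \<gamma> (c \<gamma>)) else 0)"
    using insert by (auto simp: addA_def scaleA_def eA_def smult_single)
  then show ?case by (simp only:) (intro gen_comb gen_basis insert.IH)
qed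

lemma gen_embed: "gen (\<lambda>v. if v = w then P else 0)"
proof -
  have e: "(\<Sum>\<gamma>\<in>Poly_Mapping.keys P. Poly_Mapping.single \<gamma> (Poly_Mapping.lookup P \<gamma>)) = P"
    by (rule pm_expand[symmetric])
  show ?thesis using gen_embed_sum[of "Poly_Mapping.keys P" w "Poly_Mapping.lookup P"] unfolding e by simp
qed

lemma gen_all: "gen (a :: 'n::finite Aelt)"
proof -
  have "gen (\<lambda>v. if v \<in> U then a v else 0)" if "finite U" for U
    using that
  proof (induction U rule: finite_induct)
    case empty
    then show ?case using gen_zero by simp
  next
    case (insert w U)
    have "(\<lambda>v. if v \<in> insert w U then a v else 0)
        = addA (scaleA 1 (\<lambda>v. if v = w then a w else 0)) (\<lambda>v. if v \<in> U then a v else 0)"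
      using insert by (auto simp: addA_def scaleA_def)
    then show ?case by (simp only:) (intro gen_comb gen_embed insert.IH)
  qed
  from this[of UNIV] show ?thesis by simp
qed

lemma Ccx_lin:
  assumes "f \<in> Ccx l" "length as = l" "k < l"
  shows "f (as[k := addA (scaleA r a) c]) = addA (scaleA r (f (as[k := a]))) (f (as[k := c]))"
proof -
  have "\<forall>as k a c r. length as = l \<and> k < l \<longrightarrow>
        f (as[k := addA (scaleA r a) c]) = addA (scaleA r (f (as[k := a]))) (f (as[k := c]))"
    using assms(1) unfolding Ccx_def by (rule CollectE) (rule conjunct2)
  then show ?thesis using assms(2,3) by blast
qed

lemma Ccx_len:
  assumes "f \<in> Ccx l" "length as \<noteq> l"
  shows "f as u = 0"
proof -
  have "\<forall>as. length as \<noteq> l \<longrightarrow> (\<forall>u. f as u = 0)"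
    using assms(1) unfolding Ccx_def by (rule CollectE) (rule conjunct1)
  then show ?thesis using assms(2) by blast
qed

lemma Ccx_unique:
  fixes f g :: "'n::finite Aelt list \<Rightarrow> 'n Aelt"
  assumes f: "f \<in> Ccx l" and g: "g \<in> Ccx l"
    and basis: "\<And>a. length a = l \<Longrightarrow> f (map eA a) = g (map eA a)"
  shows "f = g"
proof -
  have Q: "\<forall>as. length as = l \<longrightarrow> (\<forall>k<l. m \<le> k \<longrightarrow> (\<exists>x. as!k = eA x)) \<longrightarrow> f as = g as" for m
  proof (induction m)
    case 0
    show ?case
    proof (intro allI impI)
      fix as :: "'n Aelt list" assume len: "length as = l" and B: "\<forall>k<l. 0 \<le> k \<longrightarrow> (\<exists>x. as!k = eA x)"
      define a where "a = map (\<lambda>y. SOME x. y = eA x) as"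
      have "map eA a = as"
      proof (rule nth_equalityI)
        show "length (map eA a) = length as" by (simp add: a_def)
        fix k assume "k < length (map eA a)"
        then have k: "k < l" by (simp add: a_def len)
        have "\<exists>x. as!k = eA x" using B k by simp
        then have "as!k = eA (SOME x. as!k = eA x)" by (rule someI_ex)
        then show "map eA a ! k = as ! k" using k len by (simp add: a_def)
      qed
      moreover have "length a = l" using len by (simp add: a_def)
      ultimately show "f as = g as" using basis[of a] by simp
    qed
  next
    case (Suc m)
    show ?case
    proof (intro allI impI)
      fix as :: "'n Aelt list" assume len: "length as = l" and B: "\<forall>k<l. Suc m \<le> k \<longrightarrow> (\<exists>x. as!k = eA x)"
      show "f as = g as"
      proof (cases "m < l")
        case False
        then have "\<forall>k<l. m \<le> k \<longrightarrow> (\<exists>x. as!k = eA x)" by simp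
        then show ?thesis using Suc.IH len by blast
      next
        case True
        have "gen y \<Longrightarrow> f (as[m := y]) = g (as[m := y])" for y
        proof (induction y rule: gen.induct)
          case (gen_basis x)
          have "\<forall>k<l. m \<le> k \<longrightarrow> (\<exists>x'. as[m := eA x]!k = eA x')"
          proof (intro allI impI)
            fix k assume k: "k < l" "m \<le> k"
            show "\<exists>x'. as[m := eA x]!k = eA x'"
            proof (cases "k = m")
              case True
              then show ?thesis using len k by (intro exI[of _ x]) simp
            next
              case False
              then have "Suc m \<le> k" using k by simp
              moreover have "as[m := eA x]!k = as!k" using False by simp
              ultimately show ?thesis using B k by metis
            qed
          qed
          then show ?case by (intro Suc.IH[rule_format]) (simp_all add: len)
        next
          case (gen_comb a c r)
          have "f (as[m := addA (scaleA r a) c]) = addA (scaleA r (f (as[m := a]))) (f (as[m := c]))"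
            by (rule Ccx_lin[OF f len True])
          also have "\<dots> = addA (scaleA r (g (as[m := a]))) (g (as[m := c]))"
            using gen_comb by simp
          also have "\<dots> = g (as[m := addA (scaleA r a) c])"
            by (rule Ccx_lin[OF g len True, symmetric])
          finally show ?case .
        qed
        from this[OF gen_all, of "as!m"] show ?thesis by simp
      qed
    qed
  qed
  show ?thesis
  proof (intro ext)
    fix as :: "'n Aelt list" and u
    show "f as u = g as u"
    proof (cases "length as = l")
      case True
      have "f as = g as" by (rule Q[of l, rule_format]) (use True in auto)
      then show ?thesis by simp
    next
      case False
      then show ?thesis using Ccx_len[OF f] Ccx_len[OF g] by simp
    qed
  qed
qed

lemma Sig_surj:
  fixes f :: "'n::finite Aelt list \<Rightarrow> 'n Aelt"
  assumes "f \<in> Ccx l"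
  shows "f \<in> Sig l ` Bcompl l"
proof -
  have "Sig l (invF l f) = f"
    by (rule Ccx_unique[OF Sig_multilinear[OF invF_Bcompl] assms]) (auto simp: invF_basis)
  then show ?thesis using invF_Bcompl by (metis image_eqI)
qed


theorem proposition3:
  fixes \<theta> \<theta>' :: "'n::finite \<Rightarrow> 'n \<Rightarrow> real" and l :: nat
  assumes "\<forall>i j. \<theta> i j = - \<theta> j i"
      and "\<forall>i j. \<theta>' i j = - \<theta>' j i"
      and "1 \<le> l"
  shows "bij_betw (Sig l) (Bcompl l :: ('n bidx list \<Rightarrow> 'n Aelt) set) (Ccx l)
    \<and> (\<forall>\<Phi>\<in>Bcompl l :: ('n bidx list \<Rightarrow> 'n Aelt) set. \<forall>\<Psi>\<in>Bcompl l. \<forall>r.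
          Sig l (\<lambda>b. addA (scaleA r (\<Phi> b)) (\<Psi> b))
          = (\<lambda>as. addA (scaleA r (Sig l \<Phi> as)) (Sig l \<Psi> as)))
    \<and> (\<forall>\<Phi>\<in>Bcompl l :: ('n bidx list \<Rightarrow> 'n Aelt) set. dC l (Sig l \<Phi>) = Sig l (dB l \<Phi>))"
  proof -
  have "bij_betw (Sig l) (Bcompl l :: ('n bidx list \<Rightarrow> 'n Aelt) set) (Ccx l)"
    unfolding bij_betw_def
  proof
    show "inj_on (Sig l) (Bcompl l :: ('n bidx list \<Rightarrow> 'n Aelt) set)"
      by (rule inj_onI) (rule Sig_inj)
    show "Sig l ` (Bcompl l :: ('n bidx list \<Rightarrow> 'n Aelt) set) = Ccx l"
      using Sig_multilinear Sig_surj by blast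
  qed
  then show ?thesis using Sig_lin dC_Sig by blast
qed

end
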